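(* For every prime $p$, the algebra $\mathbf{A}_p=(\mathbb{Z}_{p^2},+,0,-,(f_n)_{n\in\mathbb{N}})$ with $f_n(x_1,\ldots,x_n)=p\cdot x_1\cdots x_n$ satisfies: the congruence $[\mathbf{1},\mathbf{1}]$ is the congruence whose classes are the cosets of the subgroup $p\mathbb{Z}_{p^2}$, and $[\mathbf{1},[\mathbf{1},\mathbf{1}]]=\mathbf{0}$ (so $\mathbf{A}_p$ is nilpotent); moreover, for every $n\ge1$ the operation $f_n$ is a $0$-absorbing polynomial that is not constantly $0$, and $\mathbf{A}_p$ is not supernilpotent, i.e. $[\mathbf{1},\ldots,\mathbf{1}]\neq\mathbf{0}$ for every number of entries.
   Context: $\mathbf{1}$ denotes the total relation and $\mathbf{0}$ the identity relation on $\mathbb{Z}_{p^2}$. For congruences $\alpha_1,\ldots,\alpha_n$, the (higher) commutator $[\alpha_1,\ldots,\alpha_n]$ is the smallest congruence $\delta$ such that for all polynomials $f(\bar x_1,\ldots,\bar x_n)$ and tuples $\bar a_i\equiv_{\alpha_i}\bar b_i$: if $f(\bar a_1,\bar x_2,\ldots,\bar x_n)\equiv_\delta f(\bar b_1,\bar x_2,\ldots,\bar x_n)$ for all $(\bar x_2,\ldots,\bar x_n)\in\prod_{i=2}^n\{\bar a_i,\bar b_i\}\setminus\{(\bar b_2,\ldots,\bar b_n)\}$, then $f(\bar a_1,\bar b_2,\ldots,\bar b_n)\equiv_\delta f(\bar b_1,\bar b_2,\ldots,\bar b_n)$. A polynomial $g(x_1,\ldots,x_k)$ is $0$-absorbing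 if $g(y_1,\ldots,y_k)=0$ whenever some $y_i=0$. An algebra is supernilpotent if $[\mathbf{1},\ldots,\mathbf{1}]$ ($n+1$ entries) equals $\mathbf{0}$ for some $n$. *)

theory Defs
  imports Main "HOL-Computational_Algebra.Primes"
begin

text \<open>Elements of Z_{p^2} are represented by the integers 0, ..., p^2 - 1.\<close>

definition Ap_carrier :: "int \<Rightarrow> int set" where
  "Ap_carrier p = {0..<p^2}"

definition Ap_add :: "int \<Rightarrow> int \<Rightarrow> int \<Rightarrow> int" where
  "Ap_add p x y = (x + y) mod p^2"

definition Ap_zero :: "int" where
  "Ap_zero = 0"

definition Ap_neg :: "int \<Rightarrow> int \<Rightarrow> int" where
  "Ap_neg p x = (- x) mod p^2"

definition Ap_f :: "int \<Rightarrow> int list \<Rightarrow> int" where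
  "Ap_f p xs = (p * prod_list xs) mod p^2"

inductive_set Pol :: "int \<Rightarrow> 'v set \<Rightarrow> (('v \<Rightarrow> int) \<Rightarrow> int) set"
  for p :: int and V :: "'v set" where
  proj: "v \<in> V \<Longrightarrow> (\<lambda>x. x v) \<in> Pol p V"
| const: "c \<in> Ap_carrier p \<Longrightarrow> (\<lambda>x. c) \<in> Pol p V"
| zero: "(\<lambda>x. Ap_zero) \<in> Pol p V"
| add: "f \<in> Pol p V \<Longrightarrow> g \<in> Pol p V \<Longrightarrow> (\<lambda>x. Ap_add p (f x) (g x)) \<in> Pol p V"
| neg: "f \<in> Pol p V \<Longrightarrow> (\<lambda>x. Ap_neg p (f x)) \<in> Pol p V"
| fop: "\<forall>f\<in>set fs. f \<in> Pol p V \<Longrightarrow> (\<lambda>x. Ap_f p (map (\<lambda>f. f x) fs)) \<in> Pol p V"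

definition is_cong :: "int \<Rightarrow> int rel \<Rightarrow> bool" where
  "is_cong p \<theta> \<longleftrightarrow> equiv (Ap_carrier p) \<theta>
     \<and> (\<forall>(a, b) \<in> \<theta>. \<forall>(c, d) \<in> \<theta>. (Ap_add p a c, Ap_add p b d) \<in> \<theta>)
     \<and> (\<forall>(a, b) \<in> \<theta>. (Ap_neg p a, Ap_neg p b) \<in> \<theta>)
     \<and> (\<forall>xs ys. list_all2 (\<lambda>x y. (x, y) \<in> \<theta>) xs ys \<longrightarrow> (Ap_f p xs, Ap_f p ys) \<in> \<theta>)"

definition cong_one :: "int \<Rightarrow> int rel" where
  "cong_one p = Ap_carrier p \<times> Ap_carrier p"

definition cong_zero :: "int \<Rightarrow> int rel" where
  "cong_zero p = Id_on (Ap_carrier p)"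

text \<open>Variables of a polynomial f(x_1,...,x_n) with tuples x_i of length m are
  indexed by pairs (i, j), i < n, j < m (block i, position j; blocks are 0-based).
  sel a b S picks the tuple b_i for blocks i in S and a_i otherwise.\<close>
definition sel :: "(nat \<Rightarrow> nat \<Rightarrow> int) \<Rightarrow> (nat \<Rightarrow> nat \<Rightarrow> int) \<Rightarrow> nat set
                    \<Rightarrow> (nat \<times> nat \<Rightarrow> int)" where
  "sel a b S = (\<lambda>(i, j). if i \<in> S then b i j else a i j)"

definition term_cond :: "int \<Rightarrow> int rel list \<Rightarrow> int rel \<Rightarrow> bool" where
  "term_cond p \<alpha>s \<delta> \<longleftrightarrow>
    (\<forall>m f a b. f \<in> Pol p ({..<length \<alpha>s} \<times> {..<m}) \<longrightarrow>
       (\<forall>i < length \<alpha>s. \<forall>j < m. (a i j, b i j) \<in> \<alpha>s ! i) \<longrightarrow>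
       (\<forall>S. S \<subseteq> {1..<length \<alpha>s} \<and> S \<noteq> {1..<length \<alpha>s} \<longrightarrow>
            (f (sel a b S), f (sel a b (insert 0 S))) \<in> \<delta>) \<longrightarrow>
       (f (sel a b {1..<length \<alpha>s}), f (sel a b {0..<length \<alpha>s})) \<in> \<delta>)"

definition commutator :: "int \<Rightarrow> int rel list \<Rightarrow> int rel" where
  "commutator p \<alpha>s = \<Inter> {\<delta>. is_cong p \<delta> \<and> term_cond p \<alpha>s \<delta>}"

definition subgrp_p :: "int \<Rightarrow> int set" where
  "subgrp_p p = {(p * k) mod p^2 | k. True}"

definition coset_cong :: "int \<Rightarrow> int rel" where
  "coset_cong p = {(x, y). x \<in> Ap_carrier p \<and> y \<in> Ap_carrier p
                       \<and> Ap_add p x (Ap_neg p y) \<in> subgrp_p p}"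

definition zero_absorbing :: "int \<Rightarrow> nat \<Rightarrow> ((nat \<Rightarrow> int) \<Rightarrow> int) \<Rightarrow> bool" where
  "zero_absorbing p k g \<longleftrightarrow>
    (\<forall>y. (\<forall>i<k. y i \<in> Ap_carrier p) \<and> (\<exists>i<k. y i = 0) \<longrightarrow> g y = 0)"

end

theory Submission
  imports Defs
begin


lemma dvd_mod4:
  fixes k m a b c d :: int
  assumes "k dvd m" "k dvd (a - b - c + d)"
  shows "k dvd (a mod m - b mod m - c mod m + d mod m)"
proof -
  have "a mod m - b mod m - c mod m + d mod m
        = (a - b - c + d) - m * (a div m - b div m - c div m + d div m)"
    by (simp add: minus_div_mult_eq_mod[symmetric] algebra_simps)
  thus ?thesis using assms by (simp add: dvd_diff dvd_mult2)
qed

lemma dvd_mod2: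
  fixes k m a b :: int
  assumes "k dvd m" "k dvd (a - b)"
  shows "k dvd (a mod m - b mod m)"
  using dvd_mod4[OF assms(1), of a b 0 0] assms(2) by simp

lemma p_dvd_Ap_f: "(p::int) dvd Ap_f p xs"
  unfolding Ap_f_def by (simp add: dvd_mod_iff power2_eq_square)

lemma prod_list_dvd_diff:
  fixes k :: int
  assumes "list_all2 (\<lambda>a b. k dvd a - b) xs ys"
  shows "k dvd prod_list xs - prod_list ys"
  using assms
proof (induction xs ys rule: list_all2_induct)
  case Nil then show ?case by simp
next
  case (Cons a xs b ys)
  have "a * prod_list xs - b * prod_list ys = a * (prod_list xs - prod_list ys) + (a - b) * prod_list ys"
    by (simp add: algebra_simps)
  then show ?case using Cons by (simp add: dvd_add dvd_mult)
qed

lemma carrier_eq: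
  fixes p x y :: int
  assumes "x \<in> Ap_carrier p" "y \<in> Ap_carrier p" "p^2 dvd x - y"
  shows "x = y"
proof -
  have "x mod p^2 = y mod p^2" using assms(3) by (simp add: mod_eq_dvd_iff)
  moreover have "x mod p^2 = x" "y mod p^2 = y" using assms(1,2) by (auto simp: Ap_carrier_def)
  ultimately show ?thesis by simp
qed

lemma Pol_carrier:
  assumes "f \<in> Pol p V" "p \<noteq> 0" "\<forall>v\<in>V. x v \<in> Ap_carrier p"
  shows "f x \<in> Ap_carrier p"
  using assms
  by (induction rule: Pol.induct)
     (auto simp: Ap_carrier_def Ap_add_def Ap_neg_def Ap_f_def Ap_zero_def)

lemma Pol_P1:
  assumes "f \<in> Pol p V"
  shows "\<forall>x x'. (\<forall>v\<in>V. p dvd (x' v - x v)) \<longrightarrow> p dvd (f x' - f x)"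
  using assms
proof (induction rule: Pol.induct)
  case (add f g)
  then show ?case unfolding Ap_add_def
    by (auto intro!: dvd_mod2 simp: power2_eq_square) (smt (verit) dvd_add)
next
  case (neg f)
  then show ?case unfolding Ap_neg_def
    by (auto intro!: dvd_mod2 simp: power2_eq_square) (metis dvd_minus_iff minus_diff_eq uminus_add_conv_diff)
next
  case (fop fs)
  then show ?case using p_dvd_Ap_f by (simp add: dvd_diff)
qed (auto simp: Ap_zero_def)

lemma Pol_P3:
  assumes "f \<in> Pol p V"
  shows "\<forall>x x' y y'. (\<forall>v\<in>V. x' v - x v = y' v - y v) \<longrightarrow> p dvd (f x' - f x - f y' + f y)"
  using assms
proof (induction rule: Pol.induct)
  case (proj v)
  then show ?case by auto
next
  case (add f g)
  show ?case unfolding Ap_add_def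
  proof (intro allI impI dvd_mod4)
    fix x x' y y' :: "_ \<Rightarrow> int" assume h: "\<forall>v\<in>V. x' v - x v = y' v - y v"
    show "p dvd p^2" by (simp add: power2_eq_square)
    have "(f x' + g x' - (f x + g x) - (f y' + g y') + (f y + g y)) = (f x' - f x - f y' + f y) + (g x' - g x - g y' + g y)" by simp
    then show "p dvd (f x' + g x' - (f x + g x) - (f y' + g y') + (f y + g y))"
      using add h by (metis dvd_add)
  qed
next
  case (neg f)
  show ?case unfolding Ap_neg_def
  proof (intro allI impI dvd_mod4)
    fix x x' y y' :: "_ \<Rightarrow> int" assume h: "\<forall>v\<in>V. x' v - x v = y' v - y v"
    show "p dvd p^2" by (simp add: power2_eq_square)
    have "- f x' - - f x - - f y' + - f y = - (f x' - f x - f y' + f y)" by simp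
    then show "p dvd (- f x' - - f x - - f y' + - f y)"
      using neg h by (metis dvd_minus_iff)
  qed
next
  case (fop fs)
  then show ?case using p_dvd_Ap_f by (simp add: dvd_diff dvd_add)
qed (auto simp: Ap_zero_def)

lemma Pol_P2:
  assumes "f \<in> Pol p V"
  shows "\<forall>x x' y y'. (\<forall>v\<in>V. x' v - x v = y' v - y v \<and> p dvd (x' v - x v)) \<longrightarrow> p^2 dvd (f x' - f x - f y' + f y)"
  using assms
proof (induction rule: Pol.induct)
  case (proj v)
  then show ?case by auto
next
  case (add f g)
  show ?case unfolding Ap_add_def
  proof (intro allI impI dvd_mod4)
    fix x x' y y' :: "_ \<Rightarrow> int" assume h: "\<forall>v\<in>V. x' v - x v = y' v - y v \<and> p dvd (x' v - x v)"
    show "p^2 dvd p^2" by simp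
    have "(f x' + g x' - (f x + g x) - (f y' + g y') + (f y + g y)) = (f x' - f x - f y' + f y) + (g x' - g x - g y' + g y)" by simp
    then show "p^2 dvd (f x' + g x' - (f x + g x) - (f y' + g y') + (f y + g y))"
      using add h by (metis dvd_add)
  qed
next
  case (neg f)
  show ?case unfolding Ap_neg_def
  proof (intro allI impI dvd_mod4)
    fix x x' y y' :: "_ \<Rightarrow> int" assume h: "\<forall>v\<in>V. x' v - x v = y' v - y v \<and> p dvd (x' v - x v)"
    show "p^2 dvd p^2" by simp
    have "- f x' - - f x - - f y' + - f y = - (f x' - f x - f y' + f y)" by simp
    then show "p^2 dvd (- f x' - - f x - - f y' + - f y)"
      using neg h by (metis dvd_minus_iff)
  qed
next
  case (fop fs)
  have key: "p^2 dvd Ap_f p (map (\<lambda>f. f x') fs) - Ap_f p (map (\<lambda>f. f x) fs)"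
    if h: "\<forall>v\<in>V. p dvd (x' v - x v)" for x x'
  proof -
    have "list_all2 (\<lambda>a b. p dvd a - b) (map (\<lambda>f. f x') fs) (map (\<lambda>f. f x) fs)"
      using fop h Pol_P1 by (auto simp: list_all2_map1 list_all2_map2 list_all2_same) blast
    then have "p dvd prod_list (map (\<lambda>f. f x') fs) - prod_list (map (\<lambda>f. f x) fs)"
      by (rule prod_list_dvd_diff)
    then have "p^2 dvd p * prod_list (map (\<lambda>f. f x') fs) - p * prod_list (map (\<lambda>f. f x) fs)"
      by (simp add: power2_eq_square right_diff_distrib[symmetric])
    then show ?thesis unfolding Ap_f_def by (rule dvd_mod2[OF dvd_refl])
  qed
  show ?case
  proof (intro allI impI)
    fix x x' y y' :: "_ \<Rightarrow> int" assume h: "\<forall>v\<in>V. x' v - x v = y' v - y v \<and> p dvd (x' v - x v)"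
    have h1: "\<forall>v\<in>V. p dvd (x' v - x v)" and h2: "\<forall>v\<in>V. p dvd (y' v - y v)" using h by auto
    from key[OF h1] key[OF h2] show "p\<^sup>2 dvd Ap_f p (map (\<lambda>f. f x') fs) - Ap_f p (map (\<lambda>f. f x) fs) -
             Ap_f p (map (\<lambda>f. f y') fs) + Ap_f p (map (\<lambda>f. f y) fs)"
      by (metis (no_types, lifting) diff_diff_eq2 diff_add_eq dvd_diff)
  qed
qed (auto simp: Ap_zero_def)

lemma coset_iff:
  fixes p :: int assumes "p \<noteq> 0"
  shows "(x, y) \<in> coset_cong p \<longleftrightarrow> x \<in> Ap_carrier p \<and> y \<in> Ap_carrier p \<and> p dvd (x - y)"
proof -
  have e: "Ap_add p x (Ap_neg p y) = (x - y) mod p^2"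
    unfolding Ap_add_def Ap_neg_def by (simp add: mod_add_right_eq)
  have iff: "(x - y) mod p^2 \<in> subgrp_p p \<longleftrightarrow> p dvd (x - y)"
  proof
    assume "(x - y) mod p^2 \<in> subgrp_p p"
    then obtain k where k: "(x - y) mod p^2 = (p * k) mod p^2" unfolding subgrp_p_def by auto
    then have "p^2 dvd (x - y) - p * k" by (simp add: mod_eq_dvd_iff)
    moreover have "p dvd p^2" by (simp add: power2_eq_square)
    ultimately have "p dvd (x - y) - p * k" using dvd_trans by blast
    moreover have "x - y = ((x - y) - p * k) + p * k" by simp
    ultimately show "p dvd (x - y)" by (metis dvd_add dvd_triv_left)
  next
    assume "p dvd (x - y)"
    then obtain k where "x - y = p * k" by auto
    then show "(x - y) mod p^2 \<in> subgrp_p p" unfolding subgrp_p_def by auto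
  qed
  show ?thesis unfolding coset_cong_def by (simp add: e iff)
qed

lemma add_diff_add: "(a::int) + c - (b + d) = (a - b) + (c - d)" by simp

lemma is_cong_coset:
  fixes p :: int assumes "p \<noteq> 0"
  shows "is_cong p (coset_cong p)"
proof -
  have pp: "p dvd p^2" by (simp add: power2_eq_square)
  have car: "\<And>z. z mod p^2 \<in> Ap_carrier p" using assms by (simp add: Ap_carrier_def)
  have eq: "equiv (Ap_carrier p) (coset_cong p)"
  proof (intro equivI refl_onI symI transI)
    show "coset_cong p \<subseteq> Ap_carrier p \<times> Ap_carrier p" using assms by (auto simp: coset_iff)
    show "\<And>x. x \<in> Ap_carrier p \<Longrightarrow> (x, x) \<in> coset_cong p" using assms by (auto simp: coset_iff)
    show "\<And>x y. (x, y) \<in> coset_cong p \<Longrightarrow> (y, x) \<in> coset_cong p" using assms by (auto simp: coset_iff dvd_diff_commute)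
    fix x y z assume "(x, y) \<in> coset_cong p" "(y, z) \<in> coset_cong p"
    moreover have "x - z = (x - y) + (y - z)" by simp
    ultimately show "(x, z) \<in> coset_cong p" using assms unfolding coset_iff[OF assms] by (metis dvd_add)
  qed
  have "list_all2 (\<lambda>x y. (x, y) \<in> coset_cong p) xs ys \<longrightarrow> (Ap_f p xs, Ap_f p ys) \<in> coset_cong p" for xs ys
  proof -
    have "p dvd Ap_f p xs - Ap_f p ys" by (rule dvd_diff[OF p_dvd_Ap_f p_dvd_Ap_f])
    moreover have "Ap_f p xs \<in> Ap_carrier p" "Ap_f p ys \<in> Ap_carrier p" unfolding Ap_f_def using car by auto
    ultimately show ?thesis unfolding coset_iff[OF assms] by blast
  qed
  moreover have "(Ap_add p a c, Ap_add p b d) \<in> coset_cong p" if "(a,b) \<in> coset_cong p" "(c,d) \<in> coset_cong p" for a b c d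
  proof -
    have "p dvd a - b" "p dvd c - d" using that unfolding coset_iff[OF assms] by auto
    then have "p dvd (a + c) - (b + d)" using add_diff_add[of a c b d] dvd_add by metis
    then have "p dvd (a + c) mod p^2 - (b + d) mod p^2" using pp dvd_mod2 by blast
    then show ?thesis unfolding coset_iff[OF assms] Ap_add_def using car by blast
  qed
  moreover have "(Ap_neg p a, Ap_neg p b) \<in> coset_cong p" if "(a,b) \<in> coset_cong p" for a b
  proof -
    have "p dvd a - b" using that unfolding coset_iff[OF assms] by auto
    then have "p dvd (- a) - (- b)" by (simp add: dvd_diff_commute)
    then have "p dvd (- a) mod p^2 - (- b) mod p^2" using pp dvd_mod2 by blast
    then show ?thesis unfolding coset_iff[OF assms] Ap_neg_def using car by blast
  qed
  ultimately show ?thesis unfolding is_cong_def using eq by auto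
qed

lemma is_cong_zero:
  fixes p :: int assumes "p \<noteq> 0"
  shows "is_cong p (cong_zero p)"
proof -
  have car: "\<And>z. z mod p^2 \<in> Ap_carrier p" using assms by (simp add: Ap_carrier_def)
  have "list_all2 (\<lambda>x y. (x, y) \<in> cong_zero p) xs ys \<longrightarrow> (Ap_f p xs, Ap_f p ys) \<in> cong_zero p" for xs ys
  proof
    assume "list_all2 (\<lambda>x y. (x, y) \<in> cong_zero p) xs ys"
    then have "xs = ys" unfolding cong_zero_def
      by (induction xs ys rule: list_all2_induct) auto
    then show "(Ap_f p xs, Ap_f p ys) \<in> cong_zero p" using car unfolding cong_zero_def Ap_f_def by auto
  qed
  moreover have "equiv (Ap_carrier p) (cong_zero p)" unfolding cong_zero_def
    by (rule equivI) (auto intro: refl_onI symI transI)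
  moreover have "(Ap_add p a c, Ap_add p b d) \<in> cong_zero p" if "(a,b) \<in> cong_zero p" "(c,d) \<in> cong_zero p" for a b c d
    using that car unfolding cong_zero_def Ap_add_def by auto
  moreover have "(Ap_neg p a, Ap_neg p b) \<in> cong_zero p" if "(a,b) \<in> cong_zero p" for a b
    using that car unfolding cong_zero_def Ap_neg_def by auto
  ultimately show ?thesis unfolding is_cong_def by auto
qed

lemma cong_refl: "is_cong p \<delta> \<Longrightarrow> x \<in> Ap_carrier p \<Longrightarrow> (x, x) \<in> \<delta>"
  unfolding is_cong_def equiv_def refl_on_def by auto

lemma cong_sub: "is_cong p \<delta> \<Longrightarrow> \<delta> \<subseteq> Ap_carrier p \<times> Ap_carrier p"
  unfolding is_cong_def equiv_def refl_on_def by auto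

lemma prod_list_zero: "i \<in> set xs \<Longrightarrow> g i = 0 \<Longrightarrow> prod_list (map g xs) = (0::int)"
  by (induction xs) auto

lemma prod_list_one: "(\<forall>i\<in>set xs. g i = 1) \<Longrightarrow> prod_list (map g xs) = (1::int)"
  by (induction xs) auto

lemma prod_list_first:
  assumes "n \<ge> 1"
  shows "prod_list (map (\<lambda>i. if i = 0 then t else 1) [0..<n]) = (t::int)"
proof -
  have "[0..<n] = 0 # [1..<n]" using assms by (simp add: upt_conv_Cons)
  moreover have "prod_list (map (\<lambda>i. if i = 0 then t else 1) [1..<n]) = 1"
    by (rule prod_list_one) auto
  ultimately show ?thesis by simp
qed

lemma TC_pair:
  fixes p t :: int
  assumes p1: "1 < p" and cong: "is_cong p \<delta>" and tc: "term_cond p \<alpha>s \<delta>"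
    and n: "length \<alpha>s = n" "n \<ge> 1" and ones: "\<forall>i<n. \<alpha>s ! i = cong_one p"
    and t: "t \<in> Ap_carrier p"
  shows "(0, (p * t) mod p^2) \<in> \<delta>"
proof -
  have p2: "1 < p^2" using one_less_power[OF p1, of 2] by simp
  have c0: "0 \<in> Ap_carrier p" and c1: "1 \<in> Ap_carrier p" using p2 by (auto simp: Ap_carrier_def)
  define f where "f = (\<lambda>x::nat\<times>nat\<Rightarrow>int. Ap_f p (map (\<lambda>i. x (i,0)) [0..<n]))"
  have fP: "f \<in> Pol p ({..<n}\<times>{..<1})"
  proof -
    have "(\<lambda>x. Ap_f p (map (\<lambda>f. f x) (map (\<lambda>i (x::nat\<times>nat\<Rightarrow>int). x (i,0)) [0..<n]))) \<in> Pol p ({..<n}\<times>{..<1})"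
      by (rule Pol.fop) (auto intro: Pol.proj)
    then show ?thesis unfolding f_def by (simp add: o_def)
  qed
  define a where "a = (\<lambda>(i::nat) (j::nat). 0::int)"
  define b where "b = (\<lambda>(i::nat) (j::nat). if i = 0 then t else (1::int))"
  have h1: "\<forall>i < length \<alpha>s. \<forall>j < 1. (a i j, b i j) \<in> \<alpha>s ! i"
    using ones n t c0 c1 by (auto simp: a_def b_def cong_one_def)
  have h2: "\<forall>S. S \<subseteq> {1..<length \<alpha>s} \<and> S \<noteq> {1..<length \<alpha>s} \<longrightarrow>
            (f (sel a b S), f (sel a b (insert 0 S))) \<in> \<delta>"
  proof (intro allI impI)
    fix S assume "S \<subseteq> {1..<length \<alpha>s} \<and> S \<noteq> {1..<length \<alpha>s}"
    then have "\<exists>i. i \<in> {1..<n} \<and> i \<notin> S" using n by blast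
    then obtain i where i: "i \<in> {1..<n}" "i \<notin> S" by blast
    have "prod_list (map (\<lambda>j. sel a b S (j,0)) [0..<n]) = 0"
      by (rule prod_list_zero[of i]) (use i in \<open>auto simp: sel_def a_def\<close>)
    moreover have "prod_list (map (\<lambda>j. sel a b (insert 0 S) (j,0)) [0..<n]) = 0"
      by (rule prod_list_zero[of i]) (use i in \<open>auto simp: sel_def a_def\<close>)
    ultimately have "f (sel a b S) = 0" "f (sel a b (insert 0 S)) = 0"
      unfolding f_def Ap_f_def by simp_all
    then show "(f (sel a b S), f (sel a b (insert 0 S))) \<in> \<delta>" using cong_refl[OF cong c0] by simp
  qed
  have "(f (sel a b {1..<length \<alpha>s}), f (sel a b {0..<length \<alpha>s})) \<in> \<delta>"
    using tc fP h1 h2 n unfolding term_cond_def by blast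
  moreover have "f (sel a b {1..<length \<alpha>s}) = 0"
  proof -
    have "prod_list (map (\<lambda>j. sel a b {1..<length \<alpha>s} (j,0)) [0..<n]) = 0"
      by (rule prod_list_zero[of 0]) (use n in \<open>auto simp: sel_def a_def\<close>)
    then show ?thesis unfolding f_def Ap_f_def by simp
  qed
  moreover have "f (sel a b {0..<length \<alpha>s}) = (p * t) mod p^2"
  proof -
    have m: "map (\<lambda>i. sel a b {0..<n} (i, 0)) [0..<n] = map (\<lambda>i. if i = 0 then t else 1) [0..<n]"
      by (auto simp: sel_def b_def)
    show ?thesis unfolding f_def Ap_f_def n(1) m prod_list_first[OF n(2)] ..
  qed
  ultimately show ?thesis by simp
qed

lemma sel_car:
  assumes "\<forall>i<n. \<forall>j<m. a i j \<in> Ap_carrier p \<and> b i j \<in> Ap_carrier p"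
  shows "\<forall>v\<in>{..<n}\<times>{..<m}. sel a b S v \<in> Ap_carrier p"
  using assms by (auto simp: sel_def)

lemma TC1:
  fixes p :: int assumes p0: "p \<noteq> 0"
  shows "term_cond p [cong_one p, cong_one p] (coset_cong p)"
  unfolding term_cond_def
proof (intro allI impI)
  fix m f a b
  assume fP: "f \<in> Pol p ({..<length [cong_one p, cong_one p]} \<times> {..<m})"
    and hab: "\<forall>i<length [cong_one p, cong_one p]. \<forall>j<m. (a i j, b i j) \<in> [cong_one p, cong_one p] ! i"
    and hS: "\<forall>S. S \<subseteq> {1..<length [cong_one p, cong_one p]} \<and> S \<noteq> {1..<length [cong_one p, cong_one p]} \<longrightarrow>
         (f (sel a b S), f (sel a b (insert 0 S))) \<in> coset_cong p"
  have l: "length [cong_one p, cong_one p] = 2" by simp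
  have e1: "{1..<2::nat} = {1}" and e2: "{0..<2::nat} = {0,1}" by auto
  have car: "\<forall>i<2. \<forall>j<m. a i j \<in> Ap_carrier p \<and> b i j \<in> Ap_carrier p"
  proof (intro allI impI)
    fix i j :: nat assume "i < 2" "j < m"
    then have "i = 0 \<or> i = 1" by auto
    then have "(a i j, b i j) \<in> cong_one p" using hab \<open>j < m\<close> by auto
    then show "a i j \<in> Ap_carrier p \<and> b i j \<in> Ap_carrier p"
      by (auto simp: cong_one_def)
  qed
  have fP': "f \<in> Pol p ({..<2} \<times> {..<m})" using fP unfolding l .
  have hyp: "(f (sel a b {}), f (sel a b {0})) \<in> coset_cong p"
    using hS[rule_format, of "{}"] by auto
  have P3: "p dvd (f (sel a b {1}) - f (sel a b {}) - f (sel a b {0,1}) + f (sel a b {0}))"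
  proof -
    have "\<forall>v\<in>{..<2}\<times>{..<m}. sel a b {1} v - sel a b {} v = sel a b {0,1} v - sel a b {0} v"
      by (auto simp: sel_def)
    then show ?thesis using Pol_P3[OF fP'] by blast
  qed
  have d0: "p dvd f (sel a b {}) - f (sel a b {0})" using hyp coset_iff[OF p0] by blast
  have "f (sel a b {1}) - f (sel a b {0,1}) = (f (sel a b {1}) - f (sel a b {}) - f (sel a b {0,1}) + f (sel a b {0})) + (f (sel a b {}) - f (sel a b {0}))"
    by simp
  then have "p dvd f (sel a b {1}) - f (sel a b {0,1})" using P3 d0 by (metis dvd_add)
  moreover have "f (sel a b S) \<in> Ap_carrier p" for S
    using Pol_carrier[OF fP' p0 sel_car[OF car]] by blast
  ultimately have "(f (sel a b {1}), f (sel a b {0,1})) \<in> coset_cong p" using coset_iff[OF p0] by blast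
  then show "(f (sel a b {1..<length [cong_one p, cong_one p]}), f (sel a b {0..<length [cong_one p, cong_one p]})) \<in> coset_cong p"
    unfolding l e1 e2 .
qed

lemma TC2:
  fixes p :: int assumes p0: "p \<noteq> 0"
  shows "term_cond p [cong_one p, coset_cong p] (cong_zero p)"
  unfolding term_cond_def
proof (intro allI impI)
  fix m f a b
  assume fP: "f \<in> Pol p ({..<length [cong_one p, coset_cong p]} \<times> {..<m})"
    and hab: "\<forall>i<length [cong_one p, coset_cong p]. \<forall>j<m. (a i j, b i j) \<in> [cong_one p, coset_cong p] ! i"
    and hS: "\<forall>S. S \<subseteq> {1..<length [cong_one p, coset_cong p]} \<and> S \<noteq> {1..<length [cong_one p, coset_cong p]} \<longrightarrow>
         (f (sel a b S), f (sel a b (insert 0 S))) \<in> cong_zero p"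
  have l: "length [cong_one p, coset_cong p] = 2" by simp
  have e1: "{1..<2::nat} = {1}" and e2: "{0..<2::nat} = {0,1}" by auto
  have ab0: "(a 0 j, b 0 j) \<in> cong_one p" if "j < m" for j using hab that by auto
  have ab1: "(a 1 j, b 1 j) \<in> coset_cong p" if "j < m" for j using hab that by auto
  have car: "\<forall>i<2. \<forall>j<m. a i j \<in> Ap_carrier p \<and> b i j \<in> Ap_carrier p"
  proof (intro allI impI)
    fix i j :: nat assume "i < 2" "j < m"
    then have "i = 0 \<or> i = 1" by auto
    then show "a i j \<in> Ap_carrier p \<and> b i j \<in> Ap_carrier p"
      using ab0[OF \<open>j < m\<close>] ab1[OF \<open>j < m\<close>] coset_iff[OF p0] by (auto simp: cong_one_def)
  qed
  have fP': "f \<in> Pol p ({..<2} \<times> {..<m})" using fP unfolding l .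
  have hyp: "(f (sel a b {}), f (sel a b {0})) \<in> cong_zero p"
    using hS[rule_format, of "{}"] by auto
  have P2: "p^2 dvd (f (sel a b {1}) - f (sel a b {}) - f (sel a b {0,1}) + f (sel a b {0}))"
  proof -
    have "\<forall>v\<in>{..<2}\<times>{..<m}. sel a b {1} v - sel a b {} v = sel a b {0,1} v - sel a b {0} v
            \<and> p dvd (sel a b {1} v - sel a b {} v)"
    proof
      fix v :: "nat \<times> nat" assume "v \<in> {..<2::nat}\<times>{..<m}"
      then obtain i j where v: "v = (i,j)" "i < 2" "j < m" by auto
      then have "i = 0 \<or> i = 1" by auto
      then show "sel a b {1} v - sel a b {} v = sel a b {0,1} v - sel a b {0} v
            \<and> p dvd (sel a b {1} v - sel a b {} v)"
        using v ab1[OF \<open>j < m\<close>] coset_iff[OF p0] by (auto simp: sel_def dvd_diff_commute)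
    qed
    then show ?thesis using Pol_P2[OF fP'] by blast
  qed
  have d0: "f (sel a b {}) = f (sel a b {0})" using hyp by (auto simp: cong_zero_def)
  have "p^2 dvd f (sel a b {1}) - f (sel a b {0,1})" using P2 d0 by simp
  moreover have c: "f (sel a b S) \<in> Ap_carrier p" for S
    using Pol_carrier[OF fP' p0 sel_car[OF car]] by blast
  ultimately have "f (sel a b {1}) = f (sel a b {0,1})" using carrier_eq by blast
  then have "(f (sel a b {1}), f (sel a b {0,1})) \<in> cong_zero p" using c[of "{0,1}"] unfolding cong_zero_def by (metis Id_onI)
  then show "(f (sel a b {1..<length [cong_one p, coset_cong p]}), f (sel a b {0..<length [cong_one p, coset_cong p]})) \<in> cong_zero p"
    unfolding l e1 e2 .
qed


lemma comm_min: "is_cong p \<delta> \<Longrightarrow> term_cond p \<alpha>s \<delta> \<Longrightarrow> commutator p \<alpha>s \<subseteq> \<delta>"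
  unfolding commutator_def by auto

lemma comm_mem: "(\<And>\<delta>. is_cong p \<delta> \<Longrightarrow> term_cond p \<alpha>s \<delta> \<Longrightarrow> z \<in> \<delta>) \<Longrightarrow> z \<in> commutator p \<alpha>s"
  unfolding commutator_def by auto

theorem mainTheorem6:
  fixes p :: int
  assumes "prime p"
  shows "commutator p [cong_one p, cong_one p] = coset_cong p
    \<and> commutator p [cong_one p, commutator p [cong_one p, cong_one p]] = cong_zero p
    \<and> (\<forall>n\<ge>1. (\<lambda>x. Ap_f p (map x [0..<n])) \<in> Pol p {..<n}
              \<and> zero_absorbing p n (\<lambda>x. Ap_f p (map x [0..<n]))
              \<and> (\<exists>y. (\<forall>i<n. y i \<in> Ap_carrier p) \<and> Ap_f p (map y [0..<n]) \<noteq> 0))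
    \<and> (\<forall>k\<ge>1. commutator p (replicate k (cong_one p)) \<noteq> cong_zero p)"
proof -
  have p1: "1 < p" using assms prime_gt_1_int by blast
  then have p0: "p \<noteq> 0" by simp
  have p2: "1 < p^2" using one_less_power[OF p1, of 2] by simp
  have pp2: "p < p^2" using p1 by (simp add: power2_eq_square)
  have c0: "0 \<in> Ap_carrier p" and c1: "1 \<in> Ap_carrier p" using p2 by (auto simp: Ap_carrier_def)
  have cmod: "\<And>z. z mod p^2 \<in> Ap_carrier p" using p0 by (simp add: Ap_carrier_def)
  have C1: "commutator p [cong_one p, cong_one p] = coset_cong p"
  proof
    show "commutator p [cong_one p, cong_one p] \<subseteq> coset_cong p"
      by (rule comm_min[OF is_cong_coset[OF p0] TC1[OF p0]])
    show "coset_cong p \<subseteq> commutator p [cong_one p, cong_one p]"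
    proof
      fix z assume z: "z \<in> coset_cong p"
      obtain x y where xy: "z = (x, y)" by fastforce
      have x: "x \<in> Ap_carrier p" and y: "y \<in> Ap_carrier p" and d: "p dvd x - y"
        using z xy coset_iff[OF p0] by auto
      obtain k where k: "x - y = p * k" using d by auto
      define t where "t = (- k) mod p^2"
      have t: "t \<in> Ap_carrier p" unfolding t_def by (rule cmod)
      have ymod: "y = ((p * t) mod p^2 + x) mod p^2"
      proof -
        have "p^2 dvd t - (- k)" unfolding t_def
          by (metis mod_mod_trivial mod_eq_dvd_iff)
        then have "p^2 dvd p * (t - (- k))" by (rule dvd_mult)
        then have "p^2 dvd (p * t + x) - y" using k by (simp add: algebra_simps)
        then have "(p * t + x) mod p^2 = y mod p^2" by (simp add: mod_eq_dvd_iff)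
        moreover have "y mod p^2 = y" using y by (simp add: Ap_carrier_def)
        ultimately show ?thesis by (simp add: mod_add_left_eq)
      qed
      show "z \<in> commutator p [cong_one p, cong_one p]"
      proof (rule comm_mem)
        fix \<delta> assume cg: "is_cong p \<delta>" and tc: "term_cond p [cong_one p, cong_one p] \<delta>"
        have "(0, (p * t) mod p^2) \<in> \<delta>"
          by (rule TC_pair[OF p1 cg tc, of 2]) (auto simp: nth_Cons' t)
        moreover have "(x, x) \<in> \<delta>" by (rule cong_refl[OF cg x])
        ultimately have "(Ap_add p 0 x, Ap_add p ((p * t) mod p^2) x) \<in> \<delta>"
          using cg unfolding is_cong_def by blast
        moreover have "Ap_add p 0 x = x" using x by (simp add: Ap_add_def Ap_carrier_def)
        moreover have "Ap_add p ((p * t) mod p^2) x = y" using ymod by (simp add: Ap_add_def)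
        ultimately show "z \<in> \<delta>" using xy by simp
      qed
    qed
  qed
  have C2: "commutator p [cong_one p, commutator p [cong_one p, cong_one p]] = cong_zero p"
    unfolding C1
  proof
    show "commutator p [cong_one p, coset_cong p] \<subseteq> cong_zero p"
      by (rule comm_min[OF is_cong_zero[OF p0] TC2[OF p0]])
    show "cong_zero p \<subseteq> commutator p [cong_one p, coset_cong p]"
    proof
      fix z assume "z \<in> cong_zero p"
      then obtain x where x: "z = (x, x)" "x \<in> Ap_carrier p" unfolding cong_zero_def by auto
      show "z \<in> commutator p [cong_one p, coset_cong p]"
        by (rule comm_mem) (use x cong_refl in auto)
    qed
  qed
  have C3: "\<forall>n\<ge>1. (\<lambda>x. Ap_f p (map x [0..<n])) \<in> Pol p {..<n}
              \<and> zero_absorbing p n (\<lambda>x. Ap_f p (map x [0..<n]))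
              \<and> (\<exists>y. (\<forall>i<n. y i \<in> Ap_carrier p) \<and> Ap_f p (map y [0..<n]) \<noteq> 0)"
  proof (intro allI impI conjI)
    fix n :: nat assume n: "n \<ge> 1"
    have "(\<lambda>x. Ap_f p (map (\<lambda>f. f x) (map (\<lambda>i (x::nat\<Rightarrow>int). x i) [0..<n]))) \<in> Pol p {..<n}"
      by (rule Pol.fop) (auto intro: Pol.proj)
    then show "(\<lambda>x. Ap_f p (map x [0..<n])) \<in> Pol p {..<n}" by (simp add: o_def)
    show "zero_absorbing p n (\<lambda>x. Ap_f p (map x [0..<n]))"
      unfolding zero_absorbing_def
    proof (intro allI impI)
      fix y :: "nat \<Rightarrow> int" assume "(\<forall>i<n. y i \<in> Ap_carrier p) \<and> (\<exists>i<n. y i = 0)"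
      then obtain i where i: "i < n" "y i = 0" by auto
      have "prod_list (map y [0..<n]) = 0" by (rule prod_list_zero[of i]) (use i in auto)
      then show "Ap_f p (map y [0..<n]) = 0" by (simp add: Ap_f_def)
    qed
    have "Ap_f p (map (\<lambda>_. 1) [0..<n]) = p"
    proof -
      have "prod_list (map (\<lambda>_. 1::int) [0..<n]) = 1" by (rule prod_list_one) auto
      then show ?thesis using p1 pp2 by (simp add: Ap_f_def)
    qed
    then show "\<exists>y. (\<forall>i<n. y i \<in> Ap_carrier p) \<and> Ap_f p (map y [0..<n]) \<noteq> 0"
      using c1 p0 by (intro exI[of _ "\<lambda>_. 1"]) auto
  qed
  have C4: "\<forall>k\<ge>1. commutator p (replicate k (cong_one p)) \<noteq> cong_zero p"
  proof (intro allI impI)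
    fix k :: nat assume k: "k \<ge> 1"
    have "(0, p) \<in> commutator p (replicate k (cong_one p))"
    proof (rule comm_mem)
      fix \<delta> assume cg: "is_cong p \<delta>" and tc: "term_cond p (replicate k (cong_one p)) \<delta>"
      have "(0, (p * 1) mod p^2) \<in> \<delta>"
        by (rule TC_pair[OF p1 cg tc, of k]) (use k c1 in auto)
      then show "(0, p) \<in> \<delta>" using p1 pp2 by simp
    qed
    moreover have "(0, p) \<notin> cong_zero p" using p0 unfolding cong_zero_def by auto
    ultimately show "commutator p (replicate k (cong_one p)) \<noteq> cong_zero p" by blast
  qed
  show ?thesis using C1 C2 C3 C4 by blast
qed

end
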